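(* For an integer $b\ge2$ let $O_{12(b-2)+k}$, $k\in\{1,5,7\}$, denote respectively $Y(b;(2,1),(3,2),(4,3))$, $Y(b;(2,1),(3,1),(4,3))$, $Y(b;(2,1),(3,2),(4,1))$, and let $X$ be its canonical negative definite plumbed 4-manifold, with intersection form $Q_X$ on $H_2(X;\mathbb{Z})$. Then for every $n\ge1$, the orthogonal direct sum of $n$ copies of $Q_X$ does not embed (as a lattice, i.e. by a homomorphism preserving the pairing) into the standard negative definite lattice $(\mathbb{Z}^{N},\langle-1\rangle^{N})$ with $N=n\cdot\mathrm{rk}(Q_X)$.
   Context: $Y(b;(\alpha_1,\beta_1),\dots,(\alpha_r,\beta_r))$ with $\alpha_i>\beta_i>0$ coprime and $b-\sum\beta_i/\alpha_i>0$ is the boundary of its canonical negative definite plumbing: a central vertex of weight $-b$ and, for each $i$, a leg with weights $-a_i^1,\dots,-a_i^{s_i}$ where $\alpha_i/\beta_i=a_i^1-1/(a_i^2-\cdots-1/a_i^{s_i})$, $a_i^j\ge2$ (vertices are disk bundles over $S^2$ of the given Euler numbers, edges are plumbings). Concretely: for $k=1$ the legs are $(-2)$, $(-2,-2)$, $(-2,-2,-2)$; for $k=5$ they are $(-2)$, $(-3)$, $(-2,-2,-2)$; for $k=7$ they are $(-2)$, $(-2,-2)$, $(-4)$. $Q_X$ is the intersection form in the basis of spheres corresponding to vertices. $(\mathbb{Z}^N,\langle-1\rangle^N)$ is $\mathbb{Z}^N$ with $e_i\cdot e_j=-\delta_{ij}$. *)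

theory Defs
  imports Main
begin

text \<open>Hirzebruch--Jung continued fraction expansion:
  alpha/beta = a1 - 1/(a2 - ... - 1/as), all a_j >= 2 (for alpha > beta > 0 coprime).\<close>
function hj_expansion :: "nat \<Rightarrow> nat \<Rightarrow> nat list" where
  "hj_expansion \<alpha> \<beta> =
     (if \<beta> = 0 then []
      else (let a = (\<alpha> + \<beta> - 1) div \<beta> in a # hj_expansion \<beta> (a * \<beta> - \<alpha>)))"
  by pat_completeness auto
termination
proof (relation "measure snd")
  fix \<alpha> \<beta> :: nat and a
  assume "\<not> \<beta> = 0" and a: "a = (\<alpha> + \<beta> - 1) div \<beta>"
  have "a * \<beta> \<le> \<alpha> + \<beta> - 1" using a using div_times_less_eq_dividend[of "\<alpha> + \<beta> - 1" \<beta>] by (simp add: mult.commute)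
  then show "((\<beta>, a * \<beta> - \<alpha>), \<alpha>, \<beta>) \<in> measure snd"
    using \<open>\<not> \<beta> = 0\<close> by auto
qed auto

declare hj_expansion.simps[simp del]

text \<open>Vertex 0 is the central vertex
  (weight -b); the legs follow consecutively, leg i having weights
  -a_i^1,...,-a_i^{s_i} with a_i^1 adjacent to the central vertex.\<close>

definition seifert_legs :: "(nat \<times> nat) list \<Rightarrow> nat list list" where
  "seifert_legs sinv = map (\<lambda>(\<alpha>, \<beta>). hj_expansion \<alpha> \<beta>) sinv"

definition star_weights :: "nat \<Rightarrow> nat list list \<Rightarrow> int list" where
  "star_weights b legs = (- int b) # concat (map (map (\<lambda>a. - int a)) legs)"

definition leg_start :: "nat list list \<Rightarrow> nat \<Rightarrow> nat" where
  "leg_start legs i = 1 + sum_list (map length (take i legs))"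

definition star_edges :: "nat list list \<Rightarrow> (nat \<times> nat) set" where
  "star_edges legs =
     {(0, leg_start legs i) | i. i < length legs \<and> legs ! i \<noteq> []}
   \<union> {(leg_start legs i + j, leg_start legs i + j + 1) | i j.
        i < length legs \<and> j + 1 < length (legs ! i)}"

definition plumbing_form :: "int list \<Rightarrow> (nat \<times> nat) set \<Rightarrow> nat \<Rightarrow> nat \<Rightarrow> int" where
  "plumbing_form w E i j =
     (if i = j then w ! i else if (i, j) \<in> E \<or> (j, i) \<in> E then 1 else 0)"

definition plumbing_rank :: "nat \<Rightarrow> (nat \<times> nat) list \<Rightarrow> nat" where
  "plumbing_rank b sinv = length (star_weights b (seifert_legs sinv))"

definition plumbing_QX :: "nat \<Rightarrow> (nat \<times> nat) list \<Rightarrow> nat \<Rightarrow> nat \<Rightarrow> int" where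
  "plumbing_QX b sinv =
     plumbing_form (star_weights b (seifert_legs sinv)) (star_edges (seifert_legs sinv))"

definition O_invariants :: "nat \<Rightarrow> (nat \<times> nat) list" where
  "O_invariants k =
     (if k = 1 then [(2,1),(3,2),(4,3)]
      else if k = 5 then [(2,1),(3,1),(4,3)]
      else [(2,1),(3,2),(4,1)])"

definition orth_sum_copies :: "nat \<Rightarrow> nat \<Rightarrow> (nat \<Rightarrow> nat \<Rightarrow> int) \<Rightarrow> nat \<Rightarrow> nat \<Rightarrow> int" where
  "orth_sum_copies n r Q i j = (if i div r = j div r then Q (i mod r) (j mod r) else 0)"

text \<open>A lattice embedding of (Z^m, Q) into (Z^N, <-1>^N): a Z-linear map, given by
  the images A i = (A i 0, ..., A i (N-1)) of the basis vectors e_i (i < m),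
  preserving the pairing.\<close>
definition embeds_in_std_neg :: "nat \<Rightarrow> (nat \<Rightarrow> nat \<Rightarrow> int) \<Rightarrow> nat \<Rightarrow> bool" where
  "embeds_in_std_neg m Q N =
     (\<exists>A :: nat \<Rightarrow> nat \<Rightarrow> int. \<forall>i<m. \<forall>j<m. (\<Sum>l<N. - (A i l * A j l)) = Q i j)"

end

theory Submission
  imports Defs
begin


definition ip :: "nat \<Rightarrow> (nat \<Rightarrow> int) \<Rightarrow> (nat \<Rightarrow> int) \<Rightarrow> int" where
  "ip N u v = (\<Sum>l<N. u l * v l)"

lemma sq_le_sum:
  fixes N l :: nat
  assumes "l < N" shows "(u l)^2 \<le> (\<Sum>l<N. (u l)^2 :: int)"
  using assms by (auto intro!: member_le_sum)

lemma root_entry: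
  assumes "ip N u u = 2" "l < N"
  shows "u l = -1 \<or> u l = 0 \<or> u l = 1"
proof -
  have "(u l)^2 \<le> 2" using sq_le_sum[OF assms(2), of u] assms(1)
    by (simp add: ip_def power2_eq_square)
  then have h: "\<bar>u l\<bar> * \<bar>u l\<bar> \<le> 2" by (simp add: power2_eq_square abs_mult[symmetric])
  have "\<bar>u l\<bar> < 2"
  proof (rule ccontr)
    assume "\<not> \<bar>u l\<bar> < 2"
    then have "2 * 2 \<le> \<bar>u l\<bar> * \<bar>u l\<bar>" by (intro mult_mono) auto
    then show False using h by simp
  qed
  then show ?thesis by auto
qed

lemma root_sq:
  assumes "ip N u u = 2" "l < N"
  shows "(u l)^2 = (if u l = 0 then 0 else 1)"
  using root_entry[OF assms] by auto

lemma sum_two: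
  fixes f :: "nat \<Rightarrow> int"
  assumes "p < N" "q < N" "p \<noteq> q" "\<forall>l<N. l \<noteq> p \<longrightarrow> l \<noteq> q \<longrightarrow> f l = 0"
  shows "(\<Sum>l<N. f l) = f p + f q"
proof -
  have "(\<Sum>l<N. f l) = (\<Sum>l\<in>{p,q}. f l)"
    using assms by (intro sum.mono_neutral_right) auto
  then show ?thesis using assms(3) by simp
qed

lemma root_struct:
  assumes r: "ip N u u = 2"
  obtains a b where "a<N" "b<N" "a\<noteq>b" "u a \<noteq> 0" "u b \<noteq> 0"
    "\<forall>l<N. l\<noteq>a \<longrightarrow> l\<noteq>b \<longrightarrow> u l = 0"
proof -
  have "(\<Sum>l<N. (u l)^2) = 2" using r by (simp add: ip_def power2_eq_square)
  also have "(\<Sum>l<N. (u l)^2) = (\<Sum>l<N. if u l \<noteq> 0 then 1 else 0)"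
    using root_sq[OF r] by (intro sum.cong) auto
  also have "\<dots> = (\<Sum>l\<in>{l\<in>{..<N}. u l \<noteq> 0}. 1)"
    by (rule sum.inter_filter[symmetric]) simp
  finally have "card {l\<in>{..<N}. u l \<noteq> 0} = 2" by simp
  then obtain a b where ab: "{l\<in>{..<N}. u l \<noteq> 0} = {a,b}" "a \<noteq> b"
    by (auto simp: card_2_iff)
  then have "a \<in> {l\<in>{..<N}. u l \<noteq> 0}" "b \<in> {l\<in>{..<N}. u l \<noteq> 0}" by auto
  moreover have "\<forall>l<N. l\<noteq>a \<longrightarrow> l\<noteq>b \<longrightarrow> u l = 0" using ab by blast
  ultimately show ?thesis using that ab(2) by auto
qed

lemma orth_same_supp:
  assumes ru: "ip N u u = 2" and rv: "ip N v v = 2" and o: "ip N u v = 0"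
    and a: "a<N" "u a \<noteq> 0" "v a \<noteq> 0"
  shows "\<forall>l<N. (u l = 0 \<longleftrightarrow> v l = 0)"
proof -
  obtain p q where pq: "p<N" "q<N" "p\<noteq>q" "u p \<noteq> 0" "u q \<noteq> 0"
    "\<forall>l<N. l\<noteq>p \<longrightarrow> l\<noteq>q \<longrightarrow> u l = 0" by (rule root_struct[OF ru])
  have e: "u p * v p + u q * v q = 0"
    using o pq sum_two[of p N q "\<lambda>l. u l * v l"] by (simp add: ip_def)
  have up: "u p = 1 \<or> u p = -1" and uq: "u q = 1 \<or> u q = -1"
    using root_entry[OF ru, of p] root_entry[OF ru, of q] pq by auto
  have vp: "v p = -1 \<or> v p = 0 \<or> v p = 1" and vq: "v q = -1 \<or> v q = 0 \<or> v q = 1"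
    using root_entry[OF rv, of p] root_entry[OF rv, of q] pq by auto
  have "a = p \<or> a = q" using pq a by auto
  then have "v p \<noteq> 0 \<or> v q \<noteq> 0" using a by auto
  then have nz: "v p \<noteq> 0" "v q \<noteq> 0" using e up uq vp vq by auto
  have "(\<Sum>l<N. (v l)^2) = 2" using rv by (simp add: ip_def power2_eq_square)
  moreover have "(\<Sum>l<N. (v l)^2) = (\<Sum>l\<in>{..<N} - {p,q}. (v l)^2) + (\<Sum>l\<in>{p,q}. (v l)^2)"
    using pq by (intro sum.subset_diff) auto
  moreover have "(\<Sum>l\<in>{p,q}. (v l)^2) = 2" using pq(3) nz vp vq by auto
  ultimately have "(\<Sum>l\<in>{..<N} - {p,q}. (v l)^2) = 0" by simp
  then have "\<forall>l\<in>{..<N} - {p,q}. (v l)^2 = 0"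
    by (subst (asm) sum_nonneg_eq_0_iff) auto
  then show ?thesis using pq nz by auto
qed

lemma orth_disj:
  assumes ru: "ip N u u = 2" and rv: "ip N v v = 2" and o: "ip N u v = 0"
    and od: "odd (ip N c u - ip N c v)"
  shows "\<forall>l<N. u l * v l = 0"
proof (rule ccontr)
  assume "\<not> (\<forall>l<N. u l * v l = 0)"
  then obtain a where a: "a<N" "u a \<noteq> 0" "v a \<noteq> 0" by auto
  have s: "\<forall>l<N. (u l = 0 \<longleftrightarrow> v l = 0)" by (rule orth_same_supp[OF ru rv o a])
  have "ip N c u - ip N c v = (\<Sum>l<N. c l * (u l - v l))"
    by (simp add: ip_def sum_subtractf[symmetric] algebra_simps)
  also have "even \<dots>"
  proof (rule dvd_sum)
    fix l assume l: "l \<in> {..<N}"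
    have "u l = -1 \<or> u l = 0 \<or> u l = 1" "v l = -1 \<or> v l = 0 \<or> v l = 1"
      using root_entry[OF ru, of l] root_entry[OF rv, of l] l by auto
    then have "even (u l - v l)" using s l by auto
    then show "even (c l * (u l - v l))" by simp
  qed
  finally show False using od by simp
qed

lemma fam_kappa_le:
  fixes R :: "'i \<Rightarrow> nat \<Rightarrow> int"
  assumes fin: "finite I" and rt: "\<forall>i\<in>I. ip N (R i) (R i) = 2"
    and dj: "\<forall>i\<in>I. \<forall>j\<in>I. i\<noteq>j \<longrightarrow> (\<forall>l<N. R i l * R j l = 0)" and l: "l<N"
  shows "(\<Sum>i\<in>I. (R i l)^2) \<le> 1"
proof (cases "\<exists>i\<in>I. R i l \<noteq> 0")
  case True
  then obtain i where i: "i\<in>I" "R i l \<noteq> 0" by auto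
  have "(\<Sum>j\<in>I. (R j l)^2) = (R i l)^2 + (\<Sum>j\<in>I-{i}. (R j l)^2)"
    using fin i by (simp add: sum.remove)
  also have "(\<Sum>j\<in>I-{i}. (R j l)^2) = 0"
  proof (rule sum.neutral, rule ballI)
    fix j assume "j \<in> I - {i}"
    then have "R i l * R j l = 0" using dj i l by auto
    then show "(R j l)^2 = 0" using i by simp
  qed
  finally show ?thesis using root_sq[of N "R i" l] rt i l by auto
next
  case False
  then show ?thesis by simp
qed

lemma fam_sum:
  fixes R :: "'i \<Rightarrow> nat \<Rightarrow> int"
  assumes fin: "finite I" and rt: "\<forall>i\<in>I. ip N (R i) (R i) = 2"
  shows "(\<Sum>l<N. \<Sum>i\<in>I. (R i l)^2) = 2 * int (card I)"
proof -
  have "(\<Sum>l<N. \<Sum>i\<in>I. (R i l)^2) = (\<Sum>i\<in>I. \<Sum>l<N. (R i l)^2)"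
    by (rule sum.swap)
  also have "\<dots> = (\<Sum>i\<in>I. 2)"
    using rt by (intro sum.cong) (auto simp: ip_def power2_eq_square)
  finally show ?thesis by simp
qed

lemma fam_card:
  fixes R :: "'i \<Rightarrow> nat \<Rightarrow> int"
  assumes fin: "finite I" and rt: "\<forall>i\<in>I. ip N (R i) (R i) = 2"
    and dj: "\<forall>i\<in>I. \<forall>j\<in>I. i\<noteq>j \<longrightarrow> (\<forall>l<N. R i l * R j l = 0)"
  shows "2 * card I \<le> N"
proof -
  have "2 * int (card I) = (\<Sum>l<N. \<Sum>i\<in>I. (R i l)^2)" using fam_sum[OF fin rt] by simp
  also have "\<dots> \<le> (\<Sum>l<N. 1)"
    using fam_kappa_le[OF fin rt dj] by (intro sum_mono) auto
  finally show ?thesis by simp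
qed

lemma even_sq_diff: "even ((a::int) - a^2)"
  by (cases "even a") (auto simp: power2_eq_square)

lemma fam_parity:
  fixes R :: "'i \<Rightarrow> nat \<Rightarrow> int"
  assumes fin: "finite I"
  shows "even ((\<Sum>i\<in>I. ip N y (R i)) - (\<Sum>l<N. (y l)^2 * (\<Sum>i\<in>I. (R i l)^2)))"
proof -
  have "(\<Sum>l<N. (y l)^2 * (\<Sum>i\<in>I. (R i l)^2)) = (\<Sum>l<N. \<Sum>i\<in>I. (y l * R i l)^2)"
    by (simp add: sum_distrib_left power_mult_distrib)
  also have "\<dots> = (\<Sum>i\<in>I. \<Sum>l<N. (y l * R i l)^2)" by (rule sum.swap)
  finally have "(\<Sum>i\<in>I. ip N y (R i)) - (\<Sum>l<N. (y l)^2 * (\<Sum>i\<in>I. (R i l)^2))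
     = (\<Sum>i\<in>I. \<Sum>l<N. (y l * R i l - (y l * R i l)^2))"
    by (simp add: ip_def sum_subtractf)
  also have "even \<dots>"
    by (intro dvd_sum even_sq_diff)
  finally show ?thesis .
qed

definition mw :: "nat \<Rightarrow> (nat \<Rightarrow> int) \<Rightarrow> (nat \<Rightarrow> int) \<Rightarrow> int" where
  "mw N w r = (\<Sum>l<N. (w l)^2 * (r l)^2) div 2"

lemma root_weight:
  assumes r: "ip N r r = 2" and o: "ip N w r = 0"
  shows "\<forall>l<N. r l \<noteq> 0 \<longrightarrow> (w l)^2 = mw N w r" "mw N w r \<ge> 0"
    "(\<Sum>l<N. (w l)^2 * (r l)^2) = 2 * mw N w r"
proof -
  obtain p q where pq: "p<N" "q<N" "p\<noteq>q" "r p \<noteq> 0" "r q \<noteq> 0"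
    "\<forall>l<N. l\<noteq>p \<longrightarrow> l\<noteq>q \<longrightarrow> r l = 0" by (rule root_struct[OF r])
  have e: "w p * r p + w q * r q = 0"
    using o pq sum_two[of p N q "\<lambda>l. w l * r l"] by (simp add: ip_def)
  have rp: "(r p)^2 = 1" and rq: "(r q)^2 = 1" using root_sq[OF r] pq by auto
  have "(w p * r p)^2 = (w q * r q)^2" using e by (simp add: eq_neg_iff_add_eq_0[symmetric])
  then have wpq: "(w p)^2 = (w q)^2" using rp rq by (simp add: power_mult_distrib)
  have "(\<Sum>l<N. (w l)^2 * (r l)^2) = (w p)^2 * (r p)^2 + (w q)^2 * (r q)^2"
    using pq by (intro sum_two) auto
  then have S: "(\<Sum>l<N. (w l)^2 * (r l)^2) = 2 * (w p)^2" using rp rq wpq by simp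
  then have m: "mw N w r = (w p)^2" by (simp add: mw_def)
  show "\<forall>l<N. r l \<noteq> 0 \<longrightarrow> (w l)^2 = mw N w r" using pq m wpq by auto
  show "mw N w r \<ge> 0" using m by simp
  show "(\<Sum>l<N. (w l)^2 * (r l)^2) = 2 * mw N w r" using S m by simp
qed

lemma weight_sum:
  assumes r: "ip N r r = 2" and o: "ip N w r = 0"
  shows "(\<Sum>l<N. f l * (w l)^2 * (r l)^2) = mw N w r * (\<Sum>l<N. f l * (r l)^2)"
proof -
  have "(\<Sum>l<N. f l * (w l)^2 * (r l)^2) = (\<Sum>l<N. mw N w r * (f l * (r l)^2))"
    using root_weight(1)[OF r o] by (intro sum.cong) auto
  then show ?thesis by (simp add: sum_distrib_left)
qed



lemma ex7: "(\<exists>w<(7::nat). P w) \<longleftrightarrow> P 0 \<or> P 1 \<or> P 2 \<or> P 3 \<or> P 4 \<or> P 5 \<or> P 6"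
  by (auto simp: less_Suc_eq numeral_eq_Suc)

lemma ex6: "(\<exists>w<(6::nat). P w) \<longleftrightarrow> P 0 \<or> P 1 \<or> P 2 \<or> P 3 \<or> P 4 \<or> P 5"
  by (auto simp: less_Suc_eq numeral_eq_Suc)

lemma ex5: "(\<exists>w<(5::nat). P w) \<longleftrightarrow> P 0 \<or> P 1 \<or> P 2 \<or> P 3 \<or> P 4"
  by (auto simp: less_Suc_eq numeral_eq_Suc)


lemma fam_graph:
  fixes V :: "nat \<Rightarrow> nat \<Rightarrow> nat \<Rightarrow> int"
  assumes G: "\<forall>q<n. \<forall>q'<n. \<forall>v<r. \<forall>v'<r. ip N (V q v) (V q' v') = (if q = q' then g v v' else 0)"
    and S: "S \<subseteq> {..<r}"
    and dg: "\<forall>v\<in>S. g v v = 2"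
    and same: "\<forall>v\<in>S. \<forall>v'\<in>S. v \<noteq> v' \<longrightarrow> g v v' = 0 \<and> (\<exists>w<r. odd (g w v - g w v'))"
    and cross: "\<forall>v\<in>S. \<exists>w<r. odd (g w v)"
  shows "\<forall>i\<in>{..<n}\<times>S. ip N (V (fst i) (snd i)) (V (fst i) (snd i)) = 2"
    "\<forall>i\<in>{..<n}\<times>S. \<forall>j\<in>{..<n}\<times>S. i\<noteq>j \<longrightarrow>
       (\<forall>l<N. V (fst i) (snd i) l * V (fst j) (snd j) l = 0)"
proof -
  show "\<forall>i\<in>{..<n}\<times>S. ip N (V (fst i) (snd i)) (V (fst i) (snd i)) = 2"
    using G S dg by auto
  show "\<forall>i\<in>{..<n}\<times>S. \<forall>j\<in>{..<n}\<times>S. i\<noteq>j \<longrightarrow>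
       (\<forall>l<N. V (fst i) (snd i) l * V (fst j) (snd j) l = 0)"
  proof (intro ballI impI)
    fix i j assume i: "i \<in> {..<n}\<times>S" and j: "j \<in> {..<n}\<times>S" and ij: "i \<noteq> j"
    obtain q v where qv: "i = (q,v)" "q<n" "v\<in>S" using i by auto
    obtain q' v' where qv': "j = (q',v')" "q'<n" "v'\<in>S" using j by auto
    have vr: "v<r" "v'<r" using S qv qv' by auto
    have r1: "ip N (V q v) (V q v) = 2" "ip N (V q' v') (V q' v') = 2"
      using G dg qv qv' vr by auto
    show "\<forall>l<N. V (fst i) (snd i) l * V (fst j) (snd j) l = 0"
    proof (cases "q = q'")
      case True
      then have "v \<noteq> v'" using ij qv qv' by auto
      then obtain w where w: "w<r" "odd (g w v - g w v')" and o: "g v v' = 0"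
        using same qv qv' by blast
      have "ip N (V q v) (V q' v') = 0" using G qv qv' vr o True by auto
      moreover have "ip N (V q w) (V q v) - ip N (V q w) (V q' v') = g w v - g w v'"
        using G qv qv' vr w True by auto
      ultimately show ?thesis using orth_disj[OF r1 _ , of "V q w"] w qv qv' by auto
    next
      case False
      obtain w where w: "w<r" "odd (g w v)" using cross qv by blast
      have "ip N (V q v) (V q' v') = 0" using G qv qv' vr False by auto
      moreover have "ip N (V q w) (V q v) - ip N (V q w) (V q' v') = g w v"
        using G qv qv' vr w False by auto
      ultimately show ?thesis using orth_disj[OF r1 _ , of "V q w"] w qv qv' by auto
    qed
  qed
qed

abbreviation "W1 b \<equiv> star_weights b [[2],[2,2],[2,2,2]]"
abbreviation "E1 \<equiv> {(0::nat,1::nat),(0,2),(0,4),(2,3),(4,5),(5,6)}"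

lemma case1:
  fixes V :: "nat \<Rightarrow> nat \<Rightarrow> nat \<Rightarrow> int"
  assumes G: "\<forall>q<n. \<forall>q'<n. \<forall>v<7. \<forall>v'<7. ip N (V q v) (V q' v') =
     (if q = q' then - plumbing_form (W1 b) E1 v v' else 0)"
    and N: "N = n * 7" and n: "n \<ge> 1"
  shows False
proof -
  let ?S = "{1,2,4,6::nat}"
  let ?g = "\<lambda>v v'. - plumbing_form (W1 b) E1 v v'"
  have S: "?S \<subseteq> {..<7}" by auto
  have dg: "\<forall>v\<in>?S. ?g v v = 2" by (simp add: plumbing_form_def star_weights_def)
  have same: "\<forall>v\<in>?S. \<forall>v'\<in>?S. v \<noteq> v' \<longrightarrow> ?g v v' = 0 \<and> (\<exists>w<7. odd (?g w v - ?g w v'))"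
    by (simp add: ex7 plumbing_form_def star_weights_def)
  have cross: "\<forall>v\<in>?S. \<exists>w<7. odd (?g w v)"
    by (simp add: ex7 plumbing_form_def star_weights_def)
  note F = fam_graph[OF G S dg same cross]
  have "2 * card ({..<n}\<times>?S) \<le> N"
    by (rule fam_card[OF _ F(1) F(2)]) auto
  moreover have "card ({..<n}\<times>?S) = n * 4" by (simp add: card_cartesian_product)
  ultimately show False using N n by simp
qed


abbreviation "W5 b \<equiv> star_weights b [[2],[3],[2,2,2]]"
abbreviation "E5 \<equiv> {(0::nat,1::nat),(0,2),(0,3),(3,4),(4,5)}"

lemma case5:
  fixes V :: "nat \<Rightarrow> nat \<Rightarrow> nat \<Rightarrow> int"
  assumes G: "\<forall>q<n. \<forall>q'<n. \<forall>v<6. \<forall>v'<6. ip N (V q v) (V q' v') =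
     (if q = q' then - plumbing_form (W5 b) E5 v v' else 0)"
    and N: "N = n * 6" and n: "n \<ge> 1"
  shows False
proof -
  let ?S = "{1,3,5::nat}"
  let ?I = "{..<n}\<times>?S"
  let ?g = "\<lambda>v v'. - plumbing_form (W5 b) E5 v v'"
  let ?R = "\<lambda>i. V (fst i) (snd i)"
  define \<kappa> where "\<kappa> l = (\<Sum>i\<in>?I. (?R i l)^2)" for l
  have S: "?S \<subseteq> {..<6}" by auto
  have dg: "\<forall>v\<in>?S. ?g v v = 2" by (simp add: plumbing_form_def star_weights_def)
  have same: "\<forall>v\<in>?S. \<forall>v'\<in>?S. v \<noteq> v' \<longrightarrow> ?g v v' = 0 \<and> (\<exists>w<6. odd (?g w v - ?g w v'))"
    by (simp add: ex6 plumbing_form_def star_weights_def)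
  have cross: "\<forall>v\<in>?S. \<exists>w<6. odd (?g w v)"
    by (simp add: ex6 plumbing_form_def star_weights_def)
  note F = fam_graph[OF G S dg same cross]
  have fin: "finite ?I" by auto
  have k1: "\<forall>l<N. \<kappa> l \<le> 1" unfolding \<kappa>_def using fam_kappa_le[OF fin F(1) F(2)] by auto
  have card: "card ?I = n * 3" by (simp add: card_cartesian_product)
  have ks: "(\<Sum>l<N. \<kappa> l) = int N" unfolding \<kappa>_def using fam_sum[OF fin F(1)] card N by simp
  have "(\<Sum>l<N. 1 - \<kappa> l) = 0" using ks by (simp add: sum_subtractf)
  then have "\<forall>l\<in>{..<N}. 1 - \<kappa> l = 0" using k1 by (subst (asm) sum_nonneg_eq_0_iff) auto
  then have k: "\<forall>l<N. \<kappa> l = 1" by auto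
  let ?y = "V 0 2"
  have par: "even ((\<Sum>i\<in>?I. ip N ?y (?R i)) - (\<Sum>l<N. (?y l)^2 * \<kappa> l))"
    unfolding \<kappa>_def by (rule fam_parity[OF fin])
  have z: "(\<Sum>i\<in>?I. ip N ?y (?R i)) = 0"
  proof (rule sum.neutral, rule ballI)
    fix i assume i: "i \<in> ?I"
    then have "fst i < n" "snd i \<in> ?S" by auto
    then show "ip N ?y (?R i) = 0" using G n
      by (auto simp: plumbing_form_def star_weights_def)
  qed
  have "(\<Sum>l<N. (?y l)^2 * \<kappa> l) = ip N ?y ?y" using k by (simp add: ip_def power2_eq_square)
  also have "\<dots> = 3" using G n by (simp add: plumbing_form_def star_weights_def)
  finally show False using par z by simp
qed


lemma sum_prod_split: "(\<Sum>i\<in>A\<times>B. f i) = (\<Sum>x\<in>A. \<Sum>y\<in>B. f (x,y))"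
  by (simp add: sum.cartesian_product split_def)

lemma par_sq: "even (ip N c u - (\<Sum>l<N. c l * (u l)^2))"
proof -
  have "ip N c u - (\<Sum>l<N. c l * (u l)^2) = (\<Sum>l<N. c l * (u l - (u l)^2))"
    by (simp add: ip_def sum_subtractf[symmetric] algebra_simps)
  also have "even \<dots>" by (intro dvd_sum) (simp add: even_sq_diff)
  finally show ?thesis .
qed

lemma ip_sum_left: "ip N (\<lambda>l. \<Sum>q<n. V q l) u = (\<Sum>q<n. ip N (V q) u)"
  unfolding ip_def by (simp add: sum_distrib_right sum.swap[of _ "{..<N}"])

abbreviation "W7 b \<equiv> star_weights b [[2],[2,2],[4]]"
abbreviation "E7 \<equiv> {(0::nat,1::nat),(0,2),(0,4),(2,3)}"

lemma case7:
  fixes V :: "nat \<Rightarrow> nat \<Rightarrow> nat \<Rightarrow> int"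
  assumes G: "\<forall>q<n. \<forall>q'<n. \<forall>v<5. \<forall>v'<5. ip N (V q v) (V q' v') =
     (if q = q' then - plumbing_form (W7 b) E7 v v' else 0)"
    and N: "N = n * 5" and n: "n \<ge> 1"
  shows False
proof -
  let ?I = "{..<n}\<times>{1,2::nat}"
  let ?J = "{..<n}\<times>{3::nat}"
  let ?g = "\<lambda>v v'. - plumbing_form (W7 b) E7 v v'"
  let ?R = "\<lambda>i. V (fst i) (snd i)"
  have g: "?g 0 1 = -1" "?g 0 4 = -1" "?g 3 1 = 0" "?g 3 2 = -1" "?g 2 3 = -1"
    "?g 4 1 = 0" "?g 4 2 = 0" "?g 4 3 = 0" "?g 4 4 = 4" "?g 3 3 = 2"
    by (simp_all add: plumbing_form_def star_weights_def)
  define \<kappa> where "\<kappa> l = (\<Sum>i\<in>?I. (?R i l)^2)" for l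
  define \<zeta> where "\<zeta> l = (\<Sum>i\<in>?J. (?R i l)^2)" for l
  have hI: "{1,2::nat} \<subseteq> {..<5}" "\<forall>v\<in>{1,2::nat}. ?g v v = 2"
    "\<forall>v\<in>{1,2::nat}. \<forall>v'\<in>{1,2}. v \<noteq> v' \<longrightarrow> ?g v v' = 0 \<and> (\<exists>w<5. odd (?g w v - ?g w v'))"
    "\<forall>v\<in>{1,2::nat}. \<exists>w<5. odd (?g w v)"
    by (auto simp: ex5 plumbing_form_def star_weights_def)
  have hJ: "{3::nat} \<subseteq> {..<5}" "\<forall>v\<in>{3::nat}. ?g v v = 2"
    "\<forall>v\<in>{3::nat}. \<forall>v'\<in>{3}. v \<noteq> v' \<longrightarrow> ?g v v' = 0 \<and> (\<exists>w<5. odd (?g w v - ?g w v'))"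
    "\<forall>v\<in>{3::nat}. \<exists>w<5. odd (?g w v)"
    by (auto simp: ex5 plumbing_form_def star_weights_def)
  note FI = fam_graph[OF G hI]
  note FJ = fam_graph[OF G hJ]
  have finI: "finite ?I" and finJ: "finite ?J" by auto
  have k1: "\<forall>l<N. \<kappa> l \<le> 1" unfolding \<kappa>_def using fam_kappa_le[OF finI FI] by auto
  have z1: "\<forall>l<N. \<zeta> l \<le> 1" unfolding \<zeta>_def using fam_kappa_le[OF finJ FJ] by auto
  have k0: "\<forall>l. \<kappa> l \<ge> 0" unfolding \<kappa>_def by (auto intro: sum_nonneg)
  have cardI: "card ?I = n * 2" by (simp add: card_cartesian_product)
  have cardJ: "card ?J = n" by (simp add: card_cartesian_product)
  have ks: "(\<Sum>l<N. \<kappa> l) = 4 * int n" unfolding \<kappa>_def using fam_sum[OF finI FI(1)] cardI by simp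
  have Gs: "\<And>q q' v v'. q<n \<Longrightarrow> q'<n \<Longrightarrow> v<5 \<Longrightarrow> v'<5 \<Longrightarrow>
     ip N (V q v) (V q' v') = (if q = q' then ?g v v' else 0)" using G by blast
  have A: "(\<Sum>l<N. (V p 3 l)^2 * (1 - \<kappa> l)) = 1" if p: "p<n" for p
  proof -
    have par: "even ((\<Sum>i\<in>?I. ip N (V p 3) (?R i)) - (\<Sum>l<N. (V p 3 l)^2 * \<kappa> l))"
      unfolding \<kappa>_def by (rule fam_parity[OF finI])
    have "(\<Sum>i\<in>?I. ip N (V p 3) (?R i)) = (\<Sum>i\<in>?I. if i = (p,2) then -1 else 0)"
    proof (rule sum.cong[OF refl])
      fix i assume "i \<in> ?I"
      then obtain q v where "i = (q,v)" "q<n" "v = 1 \<or> v = 2" by auto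
      then show "ip N (V p 3) (?R i) = (if i = (p,2) then -1 else 0)"
        using Gs[of p q 3 v] p g by auto
    qed
    also have "\<dots> = -1" using p by (simp add: sum.delta)
    finally have "odd (\<Sum>l<N. (V p 3 l)^2 * \<kappa> l)" using par by simp
    moreover have "(\<Sum>l<N. (V p 3 l)^2 * \<kappa> l) \<ge> 0" using k0 by (auto intro: sum_nonneg)
    moreover have "(\<Sum>l<N. (V p 3 l)^2 * \<kappa> l) \<le> (\<Sum>l<N. (V p 3 l)^2)"
      using k1 by (intro sum_mono) (auto intro: mult_left_le)
    moreover have y3: "(\<Sum>l<N. (V p 3 l)^2) = 2"
      using Gs[of p p 3 3] p g by (simp add: ip_def power2_eq_square)
    ultimately have "(\<Sum>l<N. (V p 3 l)^2 * \<kappa> l) = 1" by presburger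
    then show ?thesis using y3 by (simp add: algebra_simps sum_subtractf)
  qed
  have "(\<Sum>l<N. \<zeta> l * (1 - \<kappa> l)) = (\<Sum>j\<in>?J. \<Sum>l<N. (?R j l)^2 * (1 - \<kappa> l))"
    unfolding \<zeta>_def by (simp add: sum_distrib_right sum.swap[of _ "{..<N}"])
  also have "\<dots> = (\<Sum>j\<in>?J. 1)" using A by (intro sum.cong) auto
  finally have zs: "(\<Sum>l<N. \<zeta> l * (1 - \<kappa> l)) = int n" using cardJ by simp
  have "(\<Sum>l<N. 1 - \<kappa> l) = int n" using ks N by (simp add: sum_subtractf)
  moreover have "(\<Sum>l<N. (1 - \<kappa> l) * (1 - \<zeta> l)) = (\<Sum>l<N. 1 - \<kappa> l) - (\<Sum>l<N. \<zeta> l * (1 - \<kappa> l))"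
    by (simp only: sum_subtractf[symmetric]) (simp add: algebra_simps)
  ultimately have "(\<Sum>l<N. (1 - \<kappa> l) * (1 - \<zeta> l)) = 0"
    using zs by simp
  then have "\<forall>l\<in>{..<N}. (1 - \<kappa> l) * (1 - \<zeta> l) = 0"
    using k1 z1 by (subst (asm) sum_nonneg_eq_0_iff) auto
  then have kz: "\<forall>l<N. 1 - \<kappa> l = (1 - \<kappa> l) * \<zeta> l" by (auto simp: algebra_simps)
  let ?w = "V 0 4"
  let ?M = "\<lambda>i. mw N ?w (?R i)"
  have wo: "ip N ?w (?R i) = 0" if "i \<in> ?I \<union> ?J" for i
  proof -
    obtain q v where qv: "i = (q,v)" by (cases i)
    then have "q<n" "v = 1 \<or> v = 2 \<or> v = 3" using that by auto
    then show ?thesis using qv using Gs[of 0 q 4 v] n g by auto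
  qed
  have rI: "ip N (?R i) (?R i) = 2" if "i \<in> ?I \<union> ?J" for i using FI FJ that by auto
  have M0: "?M i \<ge> 0" if "i \<in> ?I \<union> ?J" for i using root_weight(2)[OF rI wo] that by auto
  have M23: "?M (q,3) = ?M (q,2)" if q: "q<n" for q
  proof -
    have "ip N (V q 2) (V q 3) = -1" using Gs[of q q 2 3] q g by simp
    then obtain l where l: "l<N" "V q 2 l * V q 3 l \<noteq> 0"
      unfolding ip_def by (metis (no_types, lifting) lessThan_iff sum.neutral zero_neq_neg_one)
    have a: "(?w l)^2 = ?M (q,2)" using root_weight(1)[OF rI wo, of "(q,2)"] q l by auto
    have b: "(?w l)^2 = ?M (q,3)" using root_weight(1)[OF rI wo, of "(q,3)"] q l by auto
    show ?thesis using a b by simp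
  qed
  define mx where "mx = (\<Sum>q<n. ?M (q,1))"
  define my where "my = (\<Sum>q<n. ?M (q,2))"
  have "(\<Sum>l<N. (?w l)^2 * \<kappa> l) = (\<Sum>i\<in>?I. \<Sum>l<N. (?w l)^2 * (?R i l)^2)"
    unfolding \<kappa>_def by (simp add: sum_distrib_left sum.swap[of _ "{..<N}"])
  also have "\<dots> = (\<Sum>i\<in>?I. 2 * ?M i)"
    using root_weight(3)[OF rI wo] by (intro sum.cong) auto
  also have "\<dots> = 2 * mx + 2 * my"
    by (simp add: mx_def my_def sum_prod_split sum_distrib_left sum.distrib)
  finally have s1: "(\<Sum>l<N. (?w l)^2 * \<kappa> l) = 2 * mx + 2 * my" .
  have "(\<Sum>l<N. (?w l)^2 * (1 - \<kappa> l)) = (\<Sum>l<N. (1 - \<kappa> l) * (?w l)^2 * \<zeta> l)"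
  proof (rule sum.cong[OF refl])
    fix l assume "l \<in> {..<N}"
    then have e: "1 - \<kappa> l = (1 - \<kappa> l) * \<zeta> l" using kz by auto
    have "(?w l)^2 * (1 - \<kappa> l) = (?w l)^2 * ((1 - \<kappa> l) * \<zeta> l)"
      by (rule arg_cong[OF e])
    also have "\<dots> = (1 - \<kappa> l) * (?w l)^2 * \<zeta> l" by (simp add: algebra_simps)
    finally show "(?w l)^2 * (1 - \<kappa> l) = (1 - \<kappa> l) * (?w l)^2 * \<zeta> l" .
  qed
  also have "\<dots> = (\<Sum>j\<in>?J. \<Sum>l<N. (1 - \<kappa> l) * (?w l)^2 * (?R j l)^2)"
    unfolding \<zeta>_def by (simp add: sum_distrib_left sum.swap[of _ "{..<N}"])
  also have "\<dots> = (\<Sum>j\<in>?J. ?M j * (\<Sum>l<N. (1 - \<kappa> l) * (?R j l)^2))"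
    using weight_sum[OF rI wo] by (intro sum.cong) auto
  also have "\<dots> = (\<Sum>j\<in>?J. ?M j)"
    using A by (intro sum.cong) (auto simp: algebra_simps)
  also have "\<dots> = (\<Sum>q<n. ?M (q,3))"
    by (simp add: sum_prod_split)
  also have "\<dots> = my" unfolding my_def using M23 by (intro sum.cong) auto
  finally have s2: "(\<Sum>l<N. (?w l)^2 * (1 - \<kappa> l)) = my" .
  have "(\<Sum>l<N. (?w l)^2) = 4" using Gs[of 0 0 4 4] n g by (simp add: ip_def power2_eq_square)
  moreover have "(\<Sum>l<N. (?w l)^2) = (\<Sum>l<N. (?w l)^2 * \<kappa> l) + (\<Sum>l<N. (?w l)^2 * (1 - \<kappa> l))"
    by (simp add: sum.distrib[symmetric] algebra_simps)
  ultimately have e4: "4 = 2 * mx + 3 * my" using s1 s2 by simp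
  have mx0: "mx \<ge> 0" unfolding mx_def using M0 by (auto intro: sum_nonneg)
  have my0: "my \<ge> 0" unfolding my_def using M0 by (auto intro: sum_nonneg)
  have my: "my = 0" and mx: "mx = 2" using e4 mx0 my0 by presburger+
  have M2: "\<forall>q<n. ?M (q,2) = 0"
  proof -
    have "\<forall>q\<in>{..<n}. ?M (q,2) = 0"
      using my unfolding my_def using M0 by (subst (asm) sum_nonneg_eq_0_iff) auto
    then show ?thesis by auto
  qed
  have "(\<Sum>l<N. (?w l)^2 * (1 - \<kappa> l)) = 0" using s2 my by simp
  moreover have "\<forall>l\<in>{..<N}. (?w l)^2 * (1 - \<kappa> l) \<ge> 0" using k1 by auto
  ultimately have "\<forall>l\<in>{..<N}. (?w l)^2 * (1 - \<kappa> l) = 0"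
    using sum_nonneg_eq_0_iff[of "{..<N}" "\<lambda>l. (?w l)^2 * (1 - \<kappa> l)"] by blast
  then have wk: "\<forall>l<N. (?w l)^2 * (1 - \<kappa> l) = 0" by auto
  define C where "C l = (\<Sum>q<n. V q 0 l)" for l
  have Cw: "ip N C ?w = -1"
  proof -
    have "ip N C ?w = (\<Sum>q<n. ip N (V q 0) ?w)" unfolding C_def by (rule ip_sum_left)
    also have "\<dots> = (\<Sum>q<n. if q = 0 then -1 else 0)"
      using Gs n g by (intro sum.cong) auto
    also have "\<dots> = -1" using n by (simp add: sum.delta)
    finally show ?thesis .
  qed
  have Cx: "ip N C (V p 1) = -1" if p: "p<n" for p
  proof -
    have "ip N C (V p 1) = (\<Sum>q<n. ip N (V q 0) (V p 1))" unfolding C_def by (rule ip_sum_left)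
    also have "\<dots> = (\<Sum>q<n. if q = p then -1 else 0)"
      using Gs p g by (intro sum.cong) auto
    also have "\<dots> = -1" using p by (simp add: sum.delta)
    finally show ?thesis .
  qed
  define T where "T i = (\<Sum>l<N. C l * (?R i l)^2)" for i
  have Todd: "odd (T (q,1))" if "q<n" for q
    using par_sq[of N C "V q 1"] Cx[OF that] unfolding T_def by simp
  have "(\<Sum>l<N. C l * (?w l)^2) = (\<Sum>l<N. C l * (?w l)^2 * \<kappa> l)"
  proof (rule sum.cong[OF refl])
    fix l assume "l \<in> {..<N}"
    then have "(?w l)^2 * (1 - \<kappa> l) = 0" using wk by auto
    then show "C l * (?w l)^2 = C l * (?w l)^2 * \<kappa> l" by (simp add: algebra_simps)
  qed
  also have "\<dots> = (\<Sum>i\<in>?I. \<Sum>l<N. C l * (?w l)^2 * (?R i l)^2)"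
    unfolding \<kappa>_def by (simp add: sum_distrib_left sum.swap[of _ "{..<N}"])
  also have "\<dots> = (\<Sum>i\<in>?I. ?M i * T i)"
    unfolding T_def using weight_sum[OF rI wo] by (intro sum.cong) auto
  also have "\<dots> = (\<Sum>q<n. ?M (q,1) * T (q,1))"
    using M2 by (simp add: sum_prod_split)
  finally have CW: "(\<Sum>l<N. C l * (?w l)^2) = (\<Sum>q<n. ?M (q,1) * T (q,1))" .
  have "even ((\<Sum>q<n. ?M (q,1) * T (q,1)) - mx)"
  proof -
    have "(\<Sum>q<n. ?M (q,1) * T (q,1)) - mx = (\<Sum>q<n. ?M (q,1) * (T (q,1) - 1))"
      unfolding mx_def by (simp add: sum_subtractf[symmetric] algebra_simps)
    also have "even \<dots>" using Todd by (intro dvd_sum) auto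
    finally show ?thesis .
  qed
  then have "even (\<Sum>l<N. C l * (?w l)^2)" using CW mx by simp
  moreover have "even (ip N C ?w - (\<Sum>l<N. C l * (?w l)^2))" by (rule par_sq)
  ultimately show False using Cw by simp
qed


lemma SE1: "star_edges [[2],[2,2],[2,2,2]] = {(0,1),(0,2),(0,4),(2,3),(4,5),(5,6)}"
proof (intro set_eqI iffI)
  fix x assume "x \<in> star_edges [[2],[2,2],[2,2,2]]"
  then show "x \<in> {(0,1),(0,2),(0,4),(2,3),(4,5),(5,6)}"
    unfolding star_edges_def leg_start_def
    by (auto simp: less_Suc_eq numeral_3_eq_3 numeral_2_eq_2)
next
  fix x :: "nat \<times> nat" assume "x \<in> {(0,1),(0,2),(0,4),(2,3),(4,5),(5,6)}"
  then show "x \<in> star_edges [[2],[2,2],[2,2,2]]"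
    unfolding star_edges_def leg_start_def
    apply (elim insertE emptyE)
    apply (rule UnI1, rule CollectI, rule exI[of _ 0], simp)
    apply (rule UnI1, rule CollectI, rule exI[of _ 1], simp)
    apply (rule UnI1, rule CollectI, rule exI[of _ 2], simp)
    apply (rule UnI2, rule CollectI, rule exI[of _ 1], rule exI[of _ 0], simp)
    apply (rule UnI2, rule CollectI, rule exI[of _ 2], rule exI[of _ 0], simp)
    apply (rule UnI2, rule CollectI, rule exI[of _ 2], rule exI[of _ 1], simp)
    done
qed

lemma SE5: "star_edges [[2],[3],[2,2,2]] = {(0,1),(0,2),(0,3),(3,4),(4,5)}"
proof (intro set_eqI iffI)
  fix x assume "x \<in> star_edges [[2],[3],[2,2,2]]"
  then show "x \<in> {(0,1),(0,2),(0,3),(3,4),(4,5)}"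
    unfolding star_edges_def leg_start_def
    by (auto simp: less_Suc_eq numeral_3_eq_3 numeral_2_eq_2)
next
  fix x :: "nat \<times> nat" assume "x \<in> {(0,1),(0,2),(0,3),(3,4),(4,5)}"
  then show "x \<in> star_edges [[2],[3],[2,2,2]]"
    unfolding star_edges_def leg_start_def
    apply (elim insertE emptyE)
    apply (rule UnI1, rule CollectI, rule exI[of _ 0], simp)
    apply (rule UnI1, rule CollectI, rule exI[of _ 1], simp)
    apply (rule UnI1, rule CollectI, rule exI[of _ 2], simp)
    apply (rule UnI2, rule CollectI, rule exI[of _ 2], rule exI[of _ 0], simp)
    apply (rule UnI2, rule CollectI, rule exI[of _ 2], rule exI[of _ 1], simp)
    done
qed

lemma SE7: "star_edges [[2],[2,2],[4]] = {(0,1),(0,2),(0,4),(2,3)}"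
proof (intro set_eqI iffI)
  fix x assume "x \<in> star_edges [[2],[2,2],[4]]"
  then show "x \<in> {(0,1),(0,2),(0,4),(2,3)}"
    unfolding star_edges_def leg_start_def
    by (auto simp: less_Suc_eq numeral_3_eq_3 numeral_2_eq_2)
next
  fix x :: "nat \<times> nat" assume "x \<in> {(0,1),(0,2),(0,4),(2,3)}"
  then show "x \<in> star_edges [[2],[2,2],[4]]"
    unfolding star_edges_def leg_start_def
    apply (elim insertE emptyE)
    apply (rule UnI1, rule CollectI, rule exI[of _ 0], simp)
    apply (rule UnI1, rule CollectI, rule exI[of _ 1], simp)
    apply (rule UnI1, rule CollectI, rule exI[of _ 2], simp)
    apply (rule UnI2, rule CollectI, rule exI[of _ 1], rule exI[of _ 0], simp)
    done
qed

lemma SL1: "seifert_legs (O_invariants 1) = [[2],[2,2],[2,2,2]]"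
  by (simp add: seifert_legs_def O_invariants_def hj_expansion.simps)
lemma SL5: "seifert_legs (O_invariants 5) = [[2],[3],[2,2,2]]"
  by (simp add: seifert_legs_def O_invariants_def hj_expansion.simps)
lemma SL7: "seifert_legs (O_invariants 7) = [[2],[2,2],[4]]"
  by (simp add: seifert_legs_def O_invariants_def hj_expansion.simps)

lemma gram:
  fixes A :: "nat \<Rightarrow> nat \<Rightarrow> int"
  assumes H: "\<forall>i<n*r. \<forall>j<n*r. (\<Sum>l<N. - (A i l * A j l)) = orth_sum_copies n r Q i j"
  shows "\<forall>q<n. \<forall>q'<n. \<forall>v<r. \<forall>v'<r. ip N (\<lambda>l. A (q*r+v) l) (\<lambda>l. A (q'*r+v') l)
           = (if q = q' then - Q v v' else 0)"
proof (intro allI impI)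
  fix q q' v v' assume a: "q<n" "q'<n" "v<r" "v'<r"
  have lt: "x*r+y < n*r" if "x<n" "y<r" for x y
  proof -
    have "x*r+y < x*r + r" using that by simp
    also have "\<dots> = (x+1)*r" by simp
    also have "\<dots> \<le> n*r" using that by (intro mult_right_mono) auto
    finally show ?thesis .
  qed
  have "(\<Sum>l<N. - (A (q*r+v) l * A (q'*r+v') l)) = orth_sum_copies n r Q (q*r+v) (q'*r+v')"
    using H lt[OF a(1,3)] lt[OF a(2,4)] by blast
  moreover have "(q*r+v) div r = q" "(q*r+v) mod r = v" "(q'*r+v') div r = q'" "(q'*r+v') mod r = v'"
    using a by auto
  ultimately show "ip N (\<lambda>l. A (q*r+v) l) (\<lambda>l. A (q'*r+v') l) = (if q = q' then - Q v v' else 0)"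
    by (auto simp: ip_def orth_sum_copies_def sum_negf)
qed

theorem mainTheorem11:
  fixes b k n :: nat
  assumes "b \<ge> 2" and "k \<in> {1, 5, 7}" and "n \<ge> 1"
  shows "\<not> embeds_in_std_neg (n * plumbing_rank b (O_invariants k))
            (orth_sum_copies n (plumbing_rank b (O_invariants k)) (plumbing_QX b (O_invariants k)))
            (n * plumbing_rank b (O_invariants k))"
proof
  let ?r = "plumbing_rank b (O_invariants k)"
  let ?Q = "plumbing_QX b (O_invariants k)"
  assume "embeds_in_std_neg (n * ?r) (orth_sum_copies n ?r ?Q) (n * ?r)"
  then obtain A :: "nat \<Rightarrow> nat \<Rightarrow> int" where
    H: "\<forall>i<n * ?r. \<forall>j<n * ?r. (\<Sum>l<n * ?r. - (A i l * A j l)) = orth_sum_copies n ?r ?Q i j"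
    unfolding embeds_in_std_neg_def by blast
  define V where "V q v l = A (q * ?r + v) l" for q v l
  have G: "\<forall>q<n. \<forall>q'<n. \<forall>v<?r. \<forall>v'<?r. ip (n * ?r) (V q v) (V q' v')
           = (if q = q' then - ?Q v v' else 0)"
    using gram[OF H] unfolding V_def by simp
  consider "k = 1" | "k = 5" | "k = 7" using assms(2) by auto
  then show False
  proof cases
    case 1
    have r: "?r = 7" unfolding 1 plumbing_rank_def SL1 by (simp add: star_weights_def)
    have Q: "?Q = plumbing_form (W1 b) E1" unfolding 1 plumbing_QX_def SL1 SE1 by (rule refl)
    show False by (rule case1[of n "n * 7" V b]) (use G r Q assms(3) in auto)
  next
    case 2
    have r: "?r = 6" unfolding 2 plumbing_rank_def SL5 by (simp add: star_weights_def)
    have Q: "?Q = plumbing_form (W5 b) E5" unfolding 2 plumbing_QX_def SL5 SE5 by (rule refl)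
    show False by (rule case5[of n "n * 6" V b]) (use G r Q assms(3) in auto)
  next
    case 3
    have r: "?r = 5" unfolding 3 plumbing_rank_def SL7 by (simp add: star_weights_def)
    have Q: "?Q = plumbing_form (W7 b) E7" unfolding 3 plumbing_QX_def SL7 SE7 by (rule refl)
    show False by (rule case7[of n "n * 5" V b]) (use G r Q assms(3) in auto)
  qed
qed

end
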